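(* Let $A$ be a transitive permutation group on a finite set $\Omega_1$ and $B$ a transitive permutation group on a finite set $\Omega_2$, where $\Omega_1$ and $\Omega_2$ are disjoint. Let $N_A \trianglelefteq A$ and $N_B \trianglelefteq B$ be normal subgroups, and let $\phi \colon A/N_A \to B/N_B$ be a group isomorphism. Define \[ C=\{(a,b)\in A\times B : \phi(aN_A)=bN_B\}, \] regarded as a permutation group on $\Omega_1 \sqcup \Omega_2$, where $(a,b)$ acts as $a$ on $\Omega_1$ and as $b$ on $\Omega_2$. Call $N_A$ an essential kernel in $A$ if there is no proper transitive subgroup $M<A$ (transitive on $\Omega_1$) such that $N_A M=A$. If $N_A$ is not an essential kernel in $A$, then $C$ is not minimal as a two-orbit permutation group on $\Omega_1 \sqcup \Omega_2$; that is, $C$ has a proper subgroup that is transitive on both $\Omega_1$ and $\Omega_2$.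
   Context: A two-orbit permutation group $P$ acting on $\Omega = \Omega_1 \sqcup \Omega_2$ (with orbits $\Omega_1$ and $\Omega_2$) is called minimal if it has no proper subgroup that is transitive on both $\Omega_1$ and $\Omega_2$. The group $C$ in the statement projects surjectively onto $A$ and onto $B$ and therefore has exactly the two orbits $\Omega_1$ and $\Omega_2$. *)

theory Defs
  imports "HOL-Algebra.Algebra"
begin

definition transitive_on :: "('a \<Rightarrow> 'a) set \<Rightarrow> 'a set \<Rightarrow> bool" where
  "transitive_on G S \<longleftrightarrow> (\<forall>x\<in>S. \<forall>y\<in>S. \<exists>g\<in>G. g x = y)"

abbreviation perm_grp :: "'a set \<Rightarrow> ('a \<Rightarrow> 'a) set \<Rightarrow> ('a \<Rightarrow> 'a) monoid" where
  "perm_grp S A \<equiv> (BijGroup S)\<lparr>carrier := A\<rparr>"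

definition glue :: "'a set \<Rightarrow> ('a \<Rightarrow> 'a) \<Rightarrow> ('a \<Rightarrow> 'a) \<Rightarrow> 'a \<Rightarrow> 'a" where
  "glue S1 a b = (\<lambda>x. if x \<in> S1 then a x else b x)"

definition fibre_product ::
  "'a set \<Rightarrow> ('a \<Rightarrow> 'a) set \<Rightarrow> ('a \<Rightarrow> 'a) set \<Rightarrow> 'a set \<Rightarrow> ('a \<Rightarrow> 'a) set \<Rightarrow> ('a \<Rightarrow> 'a) set
    \<Rightarrow> (('a \<Rightarrow> 'a) set \<Rightarrow> ('a \<Rightarrow> 'a) set) \<Rightarrow> ('a \<Rightarrow> 'a) set" where
  "fibre_product S1 A NA S2 B NB phi =
     {glue S1 a b | a b. a \<in> A \<and> b \<in> B \<and>
        phi (NA #>\<^bsub>perm_grp S1 A\<^esub> a) = NB #>\<^bsub>perm_grp S2 B\<^esub> b}"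

definition essential_kernel :: "'a set \<Rightarrow> ('a \<Rightarrow> 'a) set \<Rightarrow> ('a \<Rightarrow> 'a) set \<Rightarrow> bool" where
  "essential_kernel S A N \<longleftrightarrow>
     \<not> (\<exists>M. subgroup M (perm_grp S A) \<and> M \<noteq> A \<and> transitive_on M S \<and>
            N <#>\<^bsub>perm_grp S A\<^esub> M = A)"

end

theory Submission
  imports Defs
begin

lemma equalizer_subgroup:
  assumes G: "group G" and H: "group H" and Q: "group Q"
    and f: "f \<in> hom G Q" and g: "g \<in> hom H Q" and M: "subgroup M G"
  shows "subgroup {(a,b). a \<in> M \<and> b \<in> carrier H \<and> f a = g b} (G \<times>\<times> H)"
proof -
  interpret P: group "G \<times>\<times> H" using DirProd_group[OF G H] .
  interpret fh: group_hom G Q f using G Q f by (simp add: group_hom_def group_hom_axioms_def)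
  interpret gh: group_hom H Q g using H Q g by (simp add: group_hom_def group_hom_axioms_def)
  have Msub: "M \<subseteq> carrier G" using M subgroup.subset by blast
  show ?thesis
  proof (rule P.subgroupI)
    show "{(a,b). a \<in> M \<and> b \<in> carrier H \<and> f a = g b} \<subseteq> carrier (G \<times>\<times> H)"
      using Msub by auto
    show "{(a,b). a \<in> M \<and> b \<in> carrier H \<and> f a = g b} \<noteq> {}"
      using subgroup.one_closed[OF M] fh.hom_one gh.hom_one
      by (metis (mono_tags, lifting) case_prodI empty_iff gh.G.one_closed mem_Collect_eq)
  next
    fix x assume "x \<in> {(a,b). a \<in> M \<and> b \<in> carrier H \<and> f a = g b}"
    then obtain a b where x: "x = (a,b)" "a \<in> M" "b \<in> carrier H" "f a = g b" by auto
    then have a: "a \<in> carrier G" using Msub by auto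
    show "inv\<^bsub>G \<times>\<times> H\<^esub> x \<in> {(a,b). a \<in> M \<and> b \<in> carrier H \<and> f a = g b}"
      using x a inv_DirProd[OF G H a x(3)] subgroup.m_inv_closed[OF M x(2)]
      by (simp add: fh.hom_inv gh.hom_inv)
  next
    fix x y assume "x \<in> {(a,b). a \<in> M \<and> b \<in> carrier H \<and> f a = g b}"
       "y \<in> {(a,b). a \<in> M \<and> b \<in> carrier H \<and> f a = g b}"
    then obtain a b a' b' where x: "x = (a,b)" "a \<in> M" "b \<in> carrier H" "f a = g b"
      and y: "y = (a',b')" "a' \<in> M" "b' \<in> carrier H" "f a' = g b'" by auto
    then have "a \<in> carrier G" "a' \<in> carrier G" using Msub by auto
    then show "x \<otimes>\<^bsub>G \<times>\<times> H\<^esub> y \<in> {(a,b). a \<in> M \<and> b \<in> carrier H \<and> f a = g b}"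
      using x y subgroup.m_closed[OF M x(2) y(2)] by simp
  qed
qed

lemma glue_Bij:
  assumes "S1 \<inter> S2 = {}" "a \<in> Bij S1" "b \<in> Bij S2"
  shows "glue S1 a b \<in> Bij (S1 \<union> S2)"
proof -
  have "bij_betw (glue S1 a b) S1 S1"
  proof -
    have ba: "bij_betw a S1 S1" using assms(2) unfolding Bij_def by blast
    show ?thesis
      by (rule bij_betw_cong[THEN iffD2, OF _ ba]) (simp add: glue_def)
  qed
  moreover have "bij_betw (glue S1 a b) S2 S2"
  proof -
    have bb: "bij_betw b S2 S2" using assms(3) unfolding Bij_def by blast
    show ?thesis
      by (rule bij_betw_cong[THEN iffD2, OF _ bb]) (use assms(1) in \<open>auto simp: glue_def\<close>)
  qed
  ultimately have "bij_betw (glue S1 a b) (S1 \<union> S2) (S1 \<union> S2)"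
    by (rule bij_betw_combine[OF _ _ assms(1)])
  moreover have "glue S1 a b \<in> extensional (S1 \<union> S2)"
    unfolding extensional_def
  proof (intro CollectI allI impI)
    fix x assume "x \<notin> S1 \<union> S2"
    moreover have "b \<in> extensional S2" using assms(3) by (rule Bij_imp_extensional)
    ultimately have x1: "x \<notin> S1" and x2: "x \<notin> S2" and be: "b \<in> extensional S2" by blast+
    have "glue S1 a b x = b x" unfolding glue_def using x1 by (rule if_not_P)
    also have "b x = undefined" by (rule extensional_arb[OF be x2])
    finally show "glue S1 a b x = undefined" .
  qed
  ultimately show ?thesis unfolding Bij_def by blast
qed

lemma glue_compose:
  assumes "S1 \<inter> S2 = {}" "a \<in> Bij S1" "b \<in> Bij S2" "a' \<in> Bij S1" "b' \<in> Bij S2"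
  shows "glue S1 (compose S1 a a') (compose S2 b b') = compose (S1 \<union> S2) (glue S1 a b) (glue S1 a' b')"
proof
  fix x
  have f1: "a' \<in> S1 \<rightarrow> S1" "b' \<in> S2 \<rightarrow> S2" using assms Bij_imp_funcset by blast+
  show "glue S1 (compose S1 a a') (compose S2 b b') x = compose (S1 \<union> S2) (glue S1 a b) (glue S1 a' b') x"
    using assms(1) f1 by (auto simp: glue_def compose_def)
qed

lemma glue_hom:
  assumes "S1 \<inter> S2 = {}" "subgroup A (BijGroup S1)" "subgroup B (BijGroup S2)"
  shows "(\<lambda>(a,b). glue S1 a b) \<in> hom (perm_grp S1 A \<times>\<times> perm_grp S2 B) (BijGroup (S1 \<union> S2))"
proof -
  have A: "A \<subseteq> Bij S1" using subgroup.subset[OF assms(2)] by (simp add: BijGroup_def)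
  have B: "B \<subseteq> Bij S2" using subgroup.subset[OF assms(3)] by (simp add: BijGroup_def)
  show ?thesis
  proof (rule homI)
    fix x assume "x \<in> carrier (perm_grp S1 A \<times>\<times> perm_grp S2 B)"
    then show "(\<lambda>(a,b). glue S1 a b) x \<in> carrier (BijGroup (S1 \<union> S2))"
      using A B glue_Bij[OF assms(1)] by (auto simp: BijGroup_def)
  next
    fix x y assume "x \<in> carrier (perm_grp S1 A \<times>\<times> perm_grp S2 B)"
      "y \<in> carrier (perm_grp S1 A \<times>\<times> perm_grp S2 B)"
    then obtain a b a' b' where "x = (a,b)" "y = (a',b')" "a \<in> Bij S1" "b \<in> Bij S2"
      "a' \<in> Bij S1" "b' \<in> Bij S2" using A B by fastforce
    then show "(\<lambda>(a,b). glue S1 a b) (x \<otimes>\<^bsub>perm_grp S1 A \<times>\<times> perm_grp S2 B\<^esub> y) =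
      (\<lambda>(a,b). glue S1 a b) x \<otimes>\<^bsub>BijGroup (S1 \<union> S2)\<^esub> (\<lambda>(a,b). glue S1 a b) y"
      using glue_compose[OF assms(1)] glue_Bij[OF assms(1)] by (simp add: BijGroup_def)
  qed
qed


lemma fp_memI:
  fixes S1 S2 :: "'a set" and A B NA NB :: "('a \<Rightarrow> 'a) set"
    and phi :: "('a \<Rightarrow> 'a) set \<Rightarrow> ('a \<Rightarrow> 'a) set" and a b :: "'a \<Rightarrow> 'a"
  assumes "a \<in> A" "b \<in> B" "phi (NA #>\<^bsub>perm_grp S1 A\<^esub> a) = NB #>\<^bsub>perm_grp S2 B\<^esub> b"
  shows "glue S1 a b \<in> fibre_product S1 A NA S2 B NB phi"
  unfolding fibre_product_def using assms by blast

theorem mainTheorem1: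
  fixes \<Omega>1 \<Omega>2 :: "'a set" and A B NA NB :: "('a \<Rightarrow> 'a) set"
    and phi :: "('a \<Rightarrow> 'a) set \<Rightarrow> ('a \<Rightarrow> 'a) set"
  assumes "finite \<Omega>1" and "finite \<Omega>2" and "\<Omega>1 \<inter> \<Omega>2 = {}"
    and "subgroup A (BijGroup \<Omega>1)" and "transitive_on A \<Omega>1"
    and "subgroup B (BijGroup \<Omega>2)" and "transitive_on B \<Omega>2"
    and "NA \<lhd> perm_grp \<Omega>1 A" and "NB \<lhd> perm_grp \<Omega>2 B"
    and "phi \<in> iso (perm_grp \<Omega>1 A Mod NA) (perm_grp \<Omega>2 B Mod NB)"
    and "\<not> essential_kernel \<Omega>1 A NA"
  shows "\<exists>H. subgroup H (BijGroup (\<Omega>1 \<union> \<Omega>2)) \<and>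
             H \<subset> fibre_product \<Omega>1 A NA \<Omega>2 B NB phi \<and>
             transitive_on H \<Omega>1 \<and> transitive_on H \<Omega>2"
proof -
  from assms(11) obtain M where M: "subgroup M (perm_grp \<Omega>1 A)" "M \<noteq> A"
    "transitive_on M \<Omega>1" "NA <#>\<^bsub>perm_grp \<Omega>1 A\<^esub> M = A"
    unfolding essential_kernel_def by blast
  have gA: "group (perm_grp \<Omega>1 A)" using subgroup.subgroup_is_group[OF assms(4) group_BijGroup] .
  have gB: "group (perm_grp \<Omega>2 B)" using subgroup.subgroup_is_group[OF assms(6) group_BijGroup] .
  have MA: "M \<subseteq> A" using subgroup.subset[OF M(1)] by simp
  have ABij: "A \<subseteq> Bij \<Omega>1" using subgroup.subset[OF assms(4)] by (simp add: BijGroup_def)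
  have BBij: "B \<subseteq> Bij \<Omega>2" using subgroup.subset[OF assms(6)] by (simp add: BijGroup_def)
  have "subgroup NA (perm_grp \<Omega>1 A)" by (rule normal_imp_subgroup[OF assms(8)])
  then have "NA \<subseteq> carrier (perm_grp \<Omega>1 A)" by (rule subgroup.subset)
  then have NAA: "NA \<subseteq> A" by simp
  have gQ: "group (perm_grp \<Omega>2 B Mod NB)" using normal.factorgroup_is_group[OF assms(9)] .
  define h1 where "h1 = phi \<circ> (\<lambda>a. NA #>\<^bsub>perm_grp \<Omega>1 A\<^esub> a)"
  have h1: "h1 \<in> hom (perm_grp \<Omega>1 A) (perm_grp \<Omega>2 B Mod NB)"
    unfolding h1_def using hom_compose[OF normal.r_coset_hom_Mod[OF assms(8)]] assms(10)
    unfolding iso_def by blast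
  have h2: "(\<lambda>b. NB #>\<^bsub>perm_grp \<Omega>2 B\<^esub> b) \<in> hom (perm_grp \<Omega>2 B) (perm_grp \<Omega>2 B Mod NB)"
    using normal.r_coset_hom_Mod[OF assms(9)] .
  define K where "K = {(a,b). a \<in> M \<and> b \<in> carrier (perm_grp \<Omega>2 B) \<and>
      h1 a = NB #>\<^bsub>perm_grp \<Omega>2 B\<^esub> b}"
  have K: "subgroup K (perm_grp \<Omega>1 A \<times>\<times> perm_grp \<Omega>2 B)"
    unfolding K_def using equalizer_subgroup[OF gA gB gQ h1 h2 M(1)] .
  have gh: "group_hom (perm_grp \<Omega>1 A \<times>\<times> perm_grp \<Omega>2 B) (BijGroup (\<Omega>1 \<union> \<Omega>2)) (\<lambda>(a,b). glue \<Omega>1 a b)"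
    using DirProd_group[OF gA gB] group_BijGroup glue_hom[OF assms(3) assms(4) assms(6)]
    by (simp add: group_hom_def group_hom_axioms_def)
  define H where "H = (\<lambda>(a,b). glue \<Omega>1 a b) ` K"
  have Hsub: "subgroup H (BijGroup (\<Omega>1 \<union> \<Omega>2))"
    unfolding H_def using group_hom.subgroup_img_is_subgroup[OF gh K] .
  have surjB: "\<exists>b\<in>B. phi (NA #>\<^bsub>perm_grp \<Omega>1 A\<^esub> a) = NB #>\<^bsub>perm_grp \<Omega>2 B\<^esub> b" if "a \<in> A" for a
  proof -
    have "a \<in> carrier (perm_grp \<Omega>1 A)" using that by simp
    then have "h1 a \<in> carrier (perm_grp \<Omega>2 B Mod NB)" by (rule hom_in_carrier[OF h1])
    then have "h1 a \<in> (\<Union>b\<in>carrier (perm_grp \<Omega>2 B). {NB #>\<^bsub>perm_grp \<Omega>2 B\<^esub> b})"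
      unfolding FactGroup_def RCOSETS_def by (simp only: partial_object.simps)
    then obtain b where "b \<in> carrier (perm_grp \<Omega>2 B)" "h1 a = NB #>\<^bsub>perm_grp \<Omega>2 B\<^esub> b" by blast
    moreover have "b \<in> B" using calculation(1) by simp
    ultimately show ?thesis unfolding h1_def comp_def by blast
  qed
  have surjA: "\<exists>m\<in>M. phi (NA #>\<^bsub>perm_grp \<Omega>1 A\<^esub> m) = NB #>\<^bsub>perm_grp \<Omega>2 B\<^esub> b" if "b \<in> B" for b
  proof -
    have "b \<in> carrier (perm_grp \<Omega>2 B)" using that by simp
    then have "NB #>\<^bsub>perm_grp \<Omega>2 B\<^esub> b \<in> carrier (perm_grp \<Omega>2 B Mod NB)"
      by (rule hom_in_carrier[OF h2])
    moreover have "bij_betw phi (carrier (perm_grp \<Omega>1 A Mod NA)) (carrier (perm_grp \<Omega>2 B Mod NB))"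
      using assms(10) by (simp add: iso_def)
    ultimately have "NB #>\<^bsub>perm_grp \<Omega>2 B\<^esub> b \<in> phi ` carrier (perm_grp \<Omega>1 A Mod NA)"
      using bij_betw_imp_surj_on by blast
    then obtain Xc where Xc: "Xc \<in> carrier (perm_grp \<Omega>1 A Mod NA)" "phi Xc = NB #>\<^bsub>perm_grp \<Omega>2 B\<^esub> b"
      by blast
    obtain a' where a'0: "a' \<in> carrier (perm_grp \<Omega>1 A)" "Xc = NA #>\<^bsub>perm_grp \<Omega>1 A\<^esub> a'"
    proof -
      have "Xc \<in> (\<Union>a\<in>carrier (perm_grp \<Omega>1 A). {NA #>\<^bsub>perm_grp \<Omega>1 A\<^esub> a})"
        using Xc(1) unfolding FactGroup_def RCOSETS_def by (simp only: partial_object.simps)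
      then show ?thesis using that by blast
    qed
    have a': "a' \<in> A" "Xc = NA #>\<^bsub>perm_grp \<Omega>1 A\<^esub> a'" using a'0 by simp_all
    have "a' \<in> NA <#>\<^bsub>perm_grp \<Omega>1 A\<^esub> M" using M(4) a'(1) by blast
    then have "a' \<in> (\<Union>h\<in>NA. \<Union>k\<in>M. {h \<otimes>\<^bsub>perm_grp \<Omega>1 A\<^esub> k})"
      unfolding set_mult_def by blast
    then obtain n m where nm: "n \<in> NA" "m \<in> M" "a' = n \<otimes>\<^bsub>perm_grp \<Omega>1 A\<^esub> m"
      by blast
    have "NA #>\<^bsub>perm_grp \<Omega>1 A\<^esub> a' = (NA #>\<^bsub>perm_grp \<Omega>1 A\<^esub> n) #>\<^bsub>perm_grp \<Omega>1 A\<^esub> m"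
    proof -
      have c: "NA \<subseteq> carrier (perm_grp \<Omega>1 A)" "n \<in> carrier (perm_grp \<Omega>1 A)" "m \<in> carrier (perm_grp \<Omega>1 A)"
        using NAA nm MA by auto
      show ?thesis unfolding nm(3) by (rule sym[OF group.coset_mult_assoc[OF gA c]])
    qed
    also have "NA #>\<^bsub>perm_grp \<Omega>1 A\<^esub> n = NA"
      using subgroup.rcos_const[OF normal_imp_subgroup[OF assms(8)] gA nm(1)] .
    finally have "NA #>\<^bsub>perm_grp \<Omega>1 A\<^esub> a' = NA #>\<^bsub>perm_grp \<Omega>1 A\<^esub> m" .
    then have "phi (NA #>\<^bsub>perm_grp \<Omega>1 A\<^esub> m) = phi Xc" by (simp only: a'(2))
    then show ?thesis using Xc(2) nm(2) by (intro bexI[of _ m]) simp_all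
  qed
  have glue_inj: "a = a'" if "glue \<Omega>1 a b = glue \<Omega>1 a' b'" "a \<in> A" "a' \<in> A" for a a' b b'
  proof
    fix x
    show "a x = a' x"
    proof (cases "x \<in> \<Omega>1")
      case True then show ?thesis using fun_cong[OF that(1), of x] by (simp add: glue_def)
    next
      case False
      have e: "a \<in> extensional \<Omega>1" "a' \<in> extensional \<Omega>1" using ABij that(2,3) Bij_imp_extensional by blast+
      have "a x = undefined" by (rule extensional_arb[OF e(1) False])
      moreover have "a' x = undefined" by (rule extensional_arb[OF e(2) False])
      ultimately show ?thesis by (rule trans[OF _ sym])
    qed
  qed
  have HC: "H \<subseteq> fibre_product \<Omega>1 A NA \<Omega>2 B NB phi"
  proof
    fix g assume "g \<in> H"
    then obtain p where p: "p \<in> K" "g = (\<lambda>(a,b). glue \<Omega>1 a b) p" unfolding H_def by (rule imageE)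
    obtain a b where pab: "p = (a,b)" by (cases p)
    have ab: "(a,b) \<in> K" "g = glue \<Omega>1 a b" using p pab by simp_all
    then have ab2: "a \<in> M" "b \<in> carrier (perm_grp \<Omega>2 B)" "h1 a = NB #>\<^bsub>perm_grp \<Omega>2 B\<^esub> b"
      unfolding K_def by blast+
    have "a \<in> A" "b \<in> B" using ab2(1,2) MA by auto
    moreover have "phi (NA #>\<^bsub>perm_grp \<Omega>1 A\<^esub> a) = NB #>\<^bsub>perm_grp \<Omega>2 B\<^esub> b"
      using ab2(3) unfolding h1_def comp_def .
    ultimately show "g \<in> fibre_product \<Omega>1 A NA \<Omega>2 B NB phi"
      unfolding ab(2) by (rule fp_memI[of a A b B phi "\<Omega>1" NA "\<Omega>2" NB])
  qed
  obtain a where a: "a \<in> A" "a \<notin> M" using M(2) MA by blast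
  then obtain b where b: "b \<in> B" "phi (NA #>\<^bsub>perm_grp \<Omega>1 A\<^esub> a) = NB #>\<^bsub>perm_grp \<Omega>2 B\<^esub> b"
    using surjB by blast
  have "glue \<Omega>1 a b \<in> fibre_product \<Omega>1 A NA \<Omega>2 B NB phi"
    by (rule fp_memI[of a A b B phi "\<Omega>1" NA "\<Omega>2" NB, OF a(1) b(1) b(2)])
  moreover have "glue \<Omega>1 a b \<notin> H"
  proof
    assume "glue \<Omega>1 a b \<in> H"
    then obtain p where p: "p \<in> K" "glue \<Omega>1 a b = (\<lambda>(a,b). glue \<Omega>1 a b) p" unfolding H_def by (rule imageE)
    obtain m b' where pab: "p = (m,b')" by (cases p)
    have "(m,b') \<in> K" "glue \<Omega>1 a b = glue \<Omega>1 m b'" using p pab by simp_all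
    then have "m \<in> M" unfolding K_def by blast
    then show False using glue_inj[of a b m b'] a MA \<open>glue \<Omega>1 a b = glue \<Omega>1 m b'\<close> by blast
  qed
  ultimately have HC2: "H \<subset> fibre_product \<Omega>1 A NA \<Omega>2 B NB phi" using HC by blast
  have T1: "transitive_on H \<Omega>1"
    unfolding transitive_on_def
  proof (intro ballI)
    fix x y assume xy: "x \<in> \<Omega>1" "y \<in> \<Omega>1"
    then obtain m where m: "m \<in> M" "m x = y" using M(3) unfolding transitive_on_def by blast
    then obtain b where b: "b \<in> B" "phi (NA #>\<^bsub>perm_grp \<Omega>1 A\<^esub> m) = NB #>\<^bsub>perm_grp \<Omega>2 B\<^esub> b"
      using surjB MA by blast
    have "b \<in> carrier (perm_grp \<Omega>2 B)" using b by simp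
    then have "(m,b) \<in> K" unfolding K_def h1_def comp_def using m b by blast
    then have "glue \<Omega>1 m b \<in> H" unfolding H_def by (rule rev_image_eqI) simp
    moreover have "glue \<Omega>1 m b x = y" using xy m by (simp add: glue_def)
    ultimately show "\<exists>g\<in>H. g x = y" by blast
  qed
  have T2: "transitive_on H \<Omega>2"
    unfolding transitive_on_def
  proof (intro ballI)
    fix x y assume xy: "x \<in> \<Omega>2" "y \<in> \<Omega>2"
    then obtain b where b: "b \<in> B" "b x = y" using assms(7) unfolding transitive_on_def by blast
    then obtain m where m: "m \<in> M" "phi (NA #>\<^bsub>perm_grp \<Omega>1 A\<^esub> m) = NB #>\<^bsub>perm_grp \<Omega>2 B\<^esub> b"
      using surjA by blast
    have "b \<in> carrier (perm_grp \<Omega>2 B)" using b by simp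
    then have "(m,b) \<in> K" unfolding K_def h1_def comp_def using m b by blast
    then have "glue \<Omega>1 m b \<in> H" unfolding H_def by (rule rev_image_eqI) simp
    moreover have "glue \<Omega>1 m b x = y" using xy b assms(3) by (auto simp: glue_def)
    ultimately show "\<exists>g\<in>H. g x = y" by blast
  qed
  show ?thesis using Hsub HC2 T1 T2 by blast
qed

end
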